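(* Let $\mathcal M=(Q,s_{in},s_T,s_F,\delta)$ be a Turing machine with input that never moves its input head outside the input tape. There is a closed term ${\tt trans}_{\mathcal M}$ and a constant $c$ (depending only on $\mathcal M$) such that for every term $k$ and every configuration $C$ with input tape string $i$ (with $0\le n<|i|$ for its input-head position $n$): (1) if $C$ is final, then ${\tt trans}_{\mathcal M}\,k\,\ulcorner C\urcorner\to_{det}^{m} k\,\ulcorner C\urcorner$ for some $m\le c\,|i|\log_2|i|$; (2) if $C\to_{\mathcal M} D$, then ${\tt trans}_{\mathcal M}\,k\,\ulcorner C\urcorner\to_{det}^{m} {\tt trans}_{\mathcal M}\,k\,\ulcorner D\urcorner$ for some $m\le c\,|i|\log_2|i|$.
   Context: Deterministic $\lambda$-calculus $\Lambda_{\tt det}$: terms $t ::= v \mid t\,v$, values $v ::= x\mid \lambda x.t$, evaluation contexts $E ::= [\cdot]\mid E\,v$, and $E[(\lambda x.t)v]\to_{det} E[t\{x:=v\}]$; $\to_{det}^m$ means exactly $m$ steps. Encodings: a character $a_j$ of an ordered alphabet $\Sigma=\{a_1<\dots<a_p\}$ is $\ulcorner a_j\urcorner:=\lambda x_1\ldots\lambda x_p.x_j$; strings over $\Sigma$ are $\ulcorner\varepsilon\urcorner:=\lambda x_1\ldots\lambda x_p.\lambda x_\varepsilon.x_\varepsilon$, $\ulcorner a_j r\urcorner:=\lambda x_1\ldots\lambda x_p.\lambda x_\varepsilon.x_j\ulcorner r\urcorner$. Reversed binary: $\mathrm{bin}(0)=\varepsilon$, for $n>0$ $\mathrm{bin}(n)=b_0\cdots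 b_\ell$ with $n=\sum_j b_j 2^j$, $b_\ell=1$, encoded as a string over $\{0<1\}$. Turing machines with input: $\mathbb B_I=\{0<1<\mathsf L<\mathsf R\}$, $\mathbb B_W=\{0<1<\Box\}$ ($\Box$ blank). A machine is $\mathcal M=(Q,s_{in},s_T,s_F,\delta)$ with finite ordered set of states $Q=\{s_1<\dots<s_m\}$, initial state $s_{in}$, final states $s_T,s_F$, and partial transition function $\delta:\mathbb B_I\times\mathbb B_W\times Q\rightharpoonup\{-1,+1,0\}\times\mathbb B_W\times\{\leftarrow,\rightarrow,\downarrow\}\times Q$, defined on $(b,a,s)$ only if $s\notin\{s_T,s_F\}$. A configuration is $(i,n\mid w_l,a,w_r\mid s)$ with $i=\mathsf L s'\mathsf R$, $s'\in\{0,1\}^*$, the read-only input tape string, $n\in\mathbb N$ the input-head position, $w_l,w_r\in\mathbb B_W^*$ the work tape to the left/right of the work head, $a\in\mathbb B_W$ the work-head cell, $s\in Q$; it is final if $s\in\{s_T,s_F\}$. Transition: let $b$ be the character of $i$ at position $n$ (counting from $0$) and $\delta(b,a,s)=(d\mid a',\mu\mid s')$. Then $C\to_{\mathcal M} D$ where $D$ has input position $n+d$, state $s'$, and work part: if $\mu=\downarrow$, $(w_l,a',w_r)$; if $\mu=\leftarrow$ and $w_l=w a''$, $(w,a'',a'w_r)$, and if $w_l=\varepsilon$, $(\varepsilon,\Box,a'w_r)$; if $\mu=\rightarrow$ and $w_r=a''w$, $(w_l a',a'',w)$, and if $w_r=\varepsilon$, $(w_la',\Box,\varepsilon)$. The input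 string $i$ is unchanged. The encoding of a configuration is $\ulcorner(i,n\mid w_l,a,w_r\mid s)\urcorner:=\lambda x.\,x\,\ulcorner i\urcorner\,\ulcorner\mathrm{bin}(n)\urcorner\,\ulcorner w_l^{R}\urcorner\,\ulcorner a\urcorner\,\ulcorner w_r\urcorner\,\ulcorner s\urcorner$, with $i$ encoded as a string over $\mathbb B_I$, $w_l^R$ (reversal of $w_l$) and $w_r$ as strings over $\mathbb B_W$, $a$ as a character of $\mathbb B_W$, $s$ as a character of $Q$. Note $|i|\ge 2$. *)

theory Defs
  imports Complex_Main
begin

datatype dterm = Var nat | Lam dterm | App dterm dterm

fun is_val :: "dterm \<Rightarrow> bool" where
  "is_val (Var _) = True"
| "is_val (Lam _) = True"
| "is_val (App _ _) = False"

fun det_term :: "dterm \<Rightarrow> bool" where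
  "det_term (Var _) = True"
| "det_term (Lam t) = det_term t"
| "det_term (App t u) = (det_term t \<and> is_val u \<and> det_term u)"

fun closed_at :: "nat \<Rightarrow> dterm \<Rightarrow> bool" where
  "closed_at k (Var i) = (i < k)"
| "closed_at k (Lam t) = closed_at (Suc k) t"
| "closed_at k (App t u) = (closed_at k t \<and> closed_at k u)"

definition closed :: "dterm \<Rightarrow> bool" where
  "closed t = closed_at 0 t"

fun lift :: "nat \<Rightarrow> dterm \<Rightarrow> dterm" where
  "lift k (Var i) = (if i < k then Var i else Var (Suc i))"
| "lift k (Lam t) = Lam (lift (Suc k) t)"
| "lift k (App t u) = App (lift k t) (lift k u)"

fun subst :: "dterm \<Rightarrow> nat \<Rightarrow> dterm \<Rightarrow> dterm" where
  "subst (Var i) k s = (if k < i then Var (i - 1) else if i = k then s else Var i)"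
| "subst (Lam t) k s = Lam (subst t (Suc k) (lift 0 s))"
| "subst (App t u) k s = App (subst t k s) (subst u k s)"

inductive det_step :: "dterm \<Rightarrow> dterm \<Rightarrow> bool" where
  beta: "is_val v \<Longrightarrow> det_step (App (Lam t) v) (subst t 0 v)"
| ctx: "det_step t t' \<Longrightarrow> is_val v \<Longrightarrow> det_step (App t v) (App t' v)"

definition lams :: "nat \<Rightarrow> dterm \<Rightarrow> dterm" where
  "lams n t = (Lam ^^ n) t"

text \<open>character number j (0-based, so j = 0 is a_1) of an alphabet with p letters:
  \<lambda>x_1 ... x_p. x_(j+1)\<close>
definition enc_char :: "nat \<Rightarrow> nat \<Rightarrow> dterm" where
  "enc_char p j = lams p (Var (p - 1 - j))"

text \<open>strings over an alphabet of p letters (letters as 0-based indices):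
  \<lambda>x_1..x_p x_eps. x_eps  and  \<lambda>x_1..x_p x_eps. x_(j+1) r\<close>
fun enc_str :: "nat \<Rightarrow> nat list \<Rightarrow> dterm" where
  "enc_str p [] = lams (Suc p) (Var 0)"
| "enc_str p (j # r) = lams (Suc p) (App (Var (p - j)) (enc_str p r))"

fun bin :: "nat \<Rightarrow> nat list" where
  "bin n = (if n = 0 then [] else (n mod 2) # bin (n div 2))"

datatype inp = I0 | I1 | IL | IR
datatype work = W0 | W1 | WB
datatype mv = MLeft | MRight | MStay

fun inp_idx :: "inp \<Rightarrow> nat" where
  "inp_idx I0 = 0" | "inp_idx I1 = 1" | "inp_idx IL = 2" | "inp_idx IR = 3"

fun work_idx :: "work \<Rightarrow> nat" where
  "work_idx W0 = 0" | "work_idx W1 = 1" | "work_idx WB = 2"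

text \<open>States are Q = {0 ..< nstates}, ordered numerically (state s is s_(s+1)).\<close>
record tm =
  nstates :: nat
  s_in :: nat
  s_T :: nat
  s_F :: nat
  delta :: "inp \<Rightarrow> work \<Rightarrow> nat \<Rightarrow> (int \<times> work \<times> mv \<times> nat) option"

definition wf_tm :: "tm \<Rightarrow> bool" where
  "wf_tm M \<longleftrightarrow> s_in M < nstates M \<and> s_T M < nstates M \<and> s_F M < nstates M \<and>
     (\<forall>b a s d a' \<mu> s'. delta M b a s = Some (d, a', \<mu>, s') \<longrightarrow>
        s < nstates M \<and> s \<noteq> s_T M \<and> s \<noteq> s_F M \<and> d \<in> {-1, 0, 1} \<and> s' < nstates M)"

text \<open>The input head never leaves the input tape L s' R: on L it never moves left,
  on R it never moves right.\<close>
definition input_bounded :: "tm \<Rightarrow> bool" where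
  "input_bounded M \<longleftrightarrow>
     (\<forall>a s d a' \<mu> s'. delta M IL a s = Some (d, a', \<mu>, s') \<longrightarrow> d \<noteq> -1) \<and>
     (\<forall>a s d a' \<mu> s'. delta M IR a s = Some (d, a', \<mu>, s') \<longrightarrow> d \<noteq> 1)"

type_synonym config = "inp list \<times> nat \<times> work list \<times> work \<times> work list \<times> nat"

definition is_config :: "tm \<Rightarrow> config \<Rightarrow> bool" where
  "is_config M C = (case C of (i, n, wl, a, wr, s) \<Rightarrow>
     (\<exists>s'. set s' \<subseteq> {I0, I1} \<and> i = IL # s' @ [IR]) \<and> s < nstates M)"

definition is_final :: "tm \<Rightarrow> config \<Rightarrow> bool" where
  "is_final M C = (case C of (i, n, wl, a, wr, s) \<Rightarrow> s = s_T M \<or> s = s_F M)"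

fun move_work :: "mv \<Rightarrow> work list \<Rightarrow> work \<Rightarrow> work list \<Rightarrow> work list \<times> work \<times> work list" where
  "move_work MStay wl a' wr = (wl, a', wr)"
| "move_work MLeft wl a' wr =
     (if wl = [] then ([], WB, a' # wr) else (butlast wl, last wl, a' # wr))"
| "move_work MRight wl a' wr =
     (case wr of [] \<Rightarrow> (wl @ [a'], WB, []) | a'' # w \<Rightarrow> (wl @ [a'], a'', w))"

definition tm_step :: "tm \<Rightarrow> config \<Rightarrow> config \<Rightarrow> bool" where
  "tm_step M C D = (case C of (i, n, wl, a, wr, s) \<Rightarrow>
     n < length i \<and>
     (\<exists>d a' \<mu> s' n' wl' a'' wr'. delta M (i ! n) a s = Some (d, a', \<mu>, s') \<and>
        int n' = int n + d \<and> move_work \<mu> wl a' wr = (wl', a'', wr') \<and>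
        D = (i, n', wl', a'', wr', s')))"

definition enc_config :: "tm \<Rightarrow> config \<Rightarrow> dterm" where
  "enc_config M C = (case C of (i, n, wl, a, wr, s) \<Rightarrow>
     Lam (App (App (App (App (App (App (Var 0)
        (enc_str 4 (map inp_idx i)))
        (enc_str 2 (bin n)))
        (enc_str 3 (map work_idx (rev wl))))
        (enc_char 3 (work_idx a)))
        (enc_str 3 (map work_idx wr)))
        (enc_char (nstates M) s)))"

end

theory Submission
  imports Defs
begin


declare bin.simps[simp del]
lemma bin_0[simp]: "bin 0 = []" by (simp add: bin.simps)
lemma bin_pos: "n > 0 \<Longrightarrow> bin n = (n mod 2) # bin (n div 2)" by (simp add: bin.simps)

abbreviation steps :: "nat \<Rightarrow> dterm \<Rightarrow> dterm \<Rightarrow> bool" where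
  "steps n \<equiv> det_step ^^ n"

lemma steps_trans: "steps a x y \<Longrightarrow> steps b y z \<Longrightarrow> steps (a + b) x z"
  by (metis relpowp_add relcomppI)

lemma closed_subst_gen: "closed_at j t \<Longrightarrow> j \<le> l \<Longrightarrow> subst t l v = t"
  by (induction t arbitrary: j l v) fastforce+

lemma closed_lift_gen: "closed_at j t \<Longrightarrow> j \<le> l \<Longrightarrow> lift l t = t"
  by (induction t arbitrary: j l) fastforce+

lemma subst_closed: "closed_at 0 t \<Longrightarrow> subst t l v = t"
  using closed_subst_gen by blast
lemma lift_closed: "closed_at 0 t \<Longrightarrow> lift l t = t"
  using closed_lift_gen by blast

lemma subst_lift[simp]: "subst (lift k t) k s = t"
  by (induction t arbitrary: k s) auto

fun apps :: "dterm \<Rightarrow> dterm list \<Rightarrow> dterm" where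
  "apps t [] = t"
| "apps t (v # vs) = apps (App t v) vs"

lemma det_apps: "det_step t u \<Longrightarrow> \<forall>v\<in>set vs. is_val v \<Longrightarrow> det_step (apps t vs) (apps u vs)"
  by (induction vs arbitrary: t u) (auto intro: det_step.ctx)

lemma steps_apps: "steps m t u \<Longrightarrow> \<forall>v\<in>set vs. is_val v \<Longrightarrow> steps m (apps t vs) (apps u vs)"
proof (induction m arbitrary: t)
  case 0 then show ?case by simp
next
  case (Suc m)
  from Suc.prems(1) obtain t' where "det_step t t'" "steps m t' u"
    by (metis relpowp_Suc_D2)
  then show ?case using Suc det_apps by (meson relpowp_Suc_I2)
qed

lemma steps_app1: "steps m t u \<Longrightarrow> is_val v \<Longrightarrow> steps m (App t v) (App u v)"
  using steps_apps[of m t u "[v]"] by simp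

fun red :: "dterm \<Rightarrow> dterm option" where
  "red (App (Lam t) v) = (if is_val v then Some (subst t 0 v) else None)"
| "red (App (App t u) v) = (if is_val v then map_option (\<lambda>x. App x v) (red (App t u)) else None)"
| "red _ = None"

lemma red_sound: "red t = Some u \<Longrightarrow> det_step t u"
  by (induction t arbitrary: u rule: red.induct)
     (auto split: if_splits intro: det_step.intros)

fun run :: "nat \<Rightarrow> dterm \<Rightarrow> dterm option" where
  "run 0 t = Some t"
| "run (Suc n) t = (case red t of None \<Rightarrow> None | Some u \<Rightarrow> run n u)"

lemma run_numeral[simp]: "run (numeral k) t = (case red t of None \<Rightarrow> None | Some u \<Rightarrow> run (pred_numeral k) u)"
  by (simp add: numeral_eq_Suc)

lemma run_steps: "run n t = Some u \<Longrightarrow> steps n t u"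
proof (induction n arbitrary: t)
  case 0 then show ?case by simp
next
  case (Suc n)
  then obtain t' where "red t = Some t'" "run n t' = Some u" by (auto split: option.splits)
  then show ?case using Suc red_sound by (meson relpowp_Suc_I2)
qed

lemma lams_0[simp]: "lams 0 t = t" by (simp add: lams_def)
lemma lams_Suc[simp]: "lams (Suc n) t = Lam (lams n t)" by (simp add: lams_def)
lemma lams_numeral[simp]: "lams (numeral k) t = Lam (lams (pred_numeral k) t)"
  by (simp add: numeral_eq_Suc)

lemma closed_lams: "closed_at (n + j) t \<Longrightarrow> closed_at j (lams n t)"
  by (induction n arbitrary: j) (auto simp: lams_def)

lemma closed_mono: "closed_at j t \<Longrightarrow> j \<le> l \<Longrightarrow> closed_at l t"
  by (induction t arbitrary: j l) fastforce+

lemma closed_enc_str: "\<forall>x\<in>set xs. x < p \<Longrightarrow> closed_at 0 (enc_str p xs)"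
  by (induction xs) (auto intro!: closed_lams elim: closed_mono)

lemma closed_enc_char: "j < p \<Longrightarrow> closed_at 0 (enc_char p j)"
  unfolding enc_char_def by (rule closed_lams) simp

lemma closed_enc_str_k[simp]: "\<forall>x\<in>set xs. x < p \<Longrightarrow> closed_at k (enc_str p xs)"
  using closed_enc_str closed_mono by blast
lemma closed_enc_char_k[simp]: "j < p \<Longrightarrow> closed_at k (enc_char p j)"
  using closed_enc_char closed_mono by blast

lemma subst_enc_str[simp]: "\<forall>x\<in>set xs. x < p \<Longrightarrow> subst (enc_str p xs) k v = enc_str p xs"
  by (simp add: closed_enc_str subst_closed)
lemma lift_enc_str[simp]: "\<forall>x\<in>set xs. x < p \<Longrightarrow> lift k (enc_str p xs) = enc_str p xs"
  by (simp add: closed_enc_str lift_closed)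
lemma subst_enc_char[simp]: "j < p \<Longrightarrow> subst (enc_char p j) k v = enc_char p j"
  by (simp add: closed_enc_char subst_closed)
lemma lift_enc_char[simp]: "j < p \<Longrightarrow> lift k (enc_char p j) = enc_char p j"
  by (simp add: closed_enc_char lift_closed)
lemma val_enc_str[simp]: "is_val (enc_str p xs)"
  by (cases xs) (auto simp: lams_def)
lemma val_enc_char[simp]: "0 < p \<Longrightarrow> is_val (enc_char p j)"
  by (cases p) (auto simp: lams_def enc_char_def)
lemma det_lams[simp]: "det_term (lams n t) = det_term t"
  by (induction n) auto
lemma det_enc_str[simp]: "det_term (enc_str p xs)"
  by (induction xs) auto
lemma det_enc_char[simp]: "det_term (enc_char p j)"
  by (simp add: enc_char_def)

lemma inp_idx_lt[simp]: "inp_idx x < 4" by (cases x) auto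
lemma work_idx_lt[simp]: "work_idx x < 3" by (cases x) auto
lemma bin_lt: "x \<in> set (bin n) \<Longrightarrow> x < 2"
proof (induction n rule: bin.induct)
  case (1 n) then show ?case
    by (cases "n = 0") (auto simp: bin_pos)
qed
lemma bin_lt2[simp]: "\<forall>x\<in>set (bin n). x < 2" using bin_lt by blast

fun msubst :: "dterm \<Rightarrow> dterm list \<Rightarrow> dterm" where
  "msubst b [] = b"
| "msubst b (v # vs) = msubst (subst b (length vs) v) vs"

lemma subst_lams: "closed_at 0 v \<Longrightarrow> subst (lams n b) k v = lams n (subst b (n + k) v)"
  by (induction n arbitrary: k) (auto simp: lift_closed)

lemma lams_apps: "length vs = n \<Longrightarrow> \<forall>v\<in>set vs. closed_at 0 v \<and> is_val v \<Longrightarrow>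
   steps n (apps (lams n b) vs) (msubst b vs)"
proof (induction vs arbitrary: b n)
  case Nil then show ?case by simp
next
  case (Cons v vs)
  then obtain n' where n: "n = Suc n'" "length vs = n'" by auto
  have "det_step (App (Lam (lams n' b)) v) (subst (lams n' b) 0 v)"
    using Cons.prems by (auto intro: det_step.beta)
  also have "subst (lams n' b) 0 v = lams n' (subst b n' v)"
    using Cons.prems by (simp add: subst_lams)
  finally have 1: "det_step (apps (lams n (b)) (v # vs)) (apps (lams n' (subst b n' v)) vs)"
    using Cons.prems n det_apps by (simp add: lams_def)
  have 2: "steps n' (apps (lams n' (subst b n' v)) vs) (msubst (subst b n' v) vs)"
    using Cons n by auto
  show ?case using relpowp_Suc_I2[OF 1 2] n by simp
qed

lemma msubst_closed: "closed_at 0 t \<Longrightarrow> msubst t vs = t"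
  by (induction vs arbitrary: t) (auto simp: subst_closed)

lemma msubst_Var: "i < length vs \<Longrightarrow> \<forall>v\<in>set vs. closed_at 0 v \<Longrightarrow>
   msubst (Var i) vs = vs ! (length vs - 1 - i)"
proof (induction vs arbitrary: i)
  case Nil then show ?case by simp
next
  case (Cons v vs)
  show ?case
  proof (cases "i = length vs")
    case True then show ?thesis using Cons by (simp add: msubst_closed)
  next
    case False
    then have "i < length vs" using Cons by simp
    then show ?thesis using Cons
      by (simp add: Suc_diff_Suc nth_Cons')
  qed
qed

lemma char_dispatch: "j < p \<Longrightarrow> length fs = p \<Longrightarrow> \<forall>v\<in>set fs. closed_at 0 v \<and> is_val v \<Longrightarrow>
   steps p (apps (enc_char p j) fs) (fs ! j)"
proof -
  assume a: "j < p" "length fs = p" "\<forall>v\<in>set fs. closed_at 0 v \<and> is_val v"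
  have "steps p (apps (enc_char p j) fs) (msubst (Var (p - 1 - j)) fs)"
    unfolding enc_char_def using a lams_apps by blast
  also have "msubst (Var (p - 1 - j)) fs = fs ! j"
    using a by (subst msubst_Var) auto
  finally show ?thesis .
qed




definition cE :: dterm where "cE = Lam (Lam (Lam (App (Var 1) (lams 3 (App (Var 2) (Var 3))))))"
lemma cE_closed[simp]: "closed_at k cE" by (simp add: cE_def)
lemma cE_subst[simp]: "subst cE j v = cE" by (simp add: subst_closed)
lemma cE_lift[simp]: "lift j cE = cE" by (simp add: lift_closed)
lemma cE_val[simp]: "is_val cE" by (simp add: cE_def)
lemma cE_det[simp]: "det_term cE" by (simp add: cE_def)
lemma cE_red[simp]: "red (App cE v) = (if is_val v then Some (subst (Lam (Lam (App (Var 1) (lams 3 (App (Var 2) (Var 3)))))) 0 v) else None)" by (simp add: cE_def)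

definition cEE :: dterm where "cEE = Lam (Lam (App (Var 1) ((enc_str 2 []))))"
lemma cEE_closed[simp]: "closed_at k cEE" by (simp add: cEE_def)
lemma cEE_subst[simp]: "subst cEE j v = cEE" by (simp add: subst_closed)
lemma cEE_lift[simp]: "lift j cEE = cEE" by (simp add: lift_closed)
lemma cEE_val[simp]: "is_val cEE" by (simp add: cEE_def)
lemma cEE_det[simp]: "det_term cEE" by (simp add: cEE_def)
lemma cEE_red[simp]: "red (App cEE v) = (if is_val v then Some (subst (Lam (App (Var 1) ((enc_str 2 [])))) 0 v) else None)" by (simp add: cEE_def)

definition cD0 :: dterm where "cD0 = Lam (Lam (Lam (App (App (App (Var 1) (Var 1)) (Var 2)) (Lam (App (Var 1) (lams 3 (App (Var 1) (Var 3))))))))"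
lemma cD0_closed[simp]: "closed_at k cD0" by (simp add: cD0_def)
lemma cD0_subst[simp]: "subst cD0 j v = cD0" by (simp add: subst_closed)
lemma cD0_lift[simp]: "lift j cD0 = cD0" by (simp add: lift_closed)
lemma cD0_val[simp]: "is_val cD0" by (simp add: cD0_def)
lemma cD0_det[simp]: "det_term cD0" by (simp add: cD0_def)
lemma cD0_red[simp]: "red (App cD0 v) = (if is_val v then Some (subst (Lam (Lam (App (App (App (Var 1) (Var 1)) (Var 2)) (Lam (App (Var 1) (lams 3 (App (Var 1) (Var 3)))))))) 0 v) else None)" by (simp add: cD0_def)

definition cD1 :: dterm where "cD1 = Lam (Lam (Lam (App (App (App (App (App (Var 2) ((cE))) ((cE))) ((cEE))) (Var 0)) (Var 2))))"
lemma cD1_closed[simp]: "closed_at k cD1" by (simp add: cD1_def)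
lemma cD1_subst[simp]: "subst cD1 j v = cD1" by (simp add: subst_closed)
lemma cD1_lift[simp]: "lift j cD1 = cD1" by (simp add: lift_closed)
lemma cD1_val[simp]: "is_val cD1" by (simp add: cD1_def)
lemma cD1_det[simp]: "det_term cD1" by (simp add: cD1_def)
lemma cD1_red[simp]: "red (App cD1 v) = (if is_val v then Some (subst (Lam (Lam (App (App (App (App (App (Var 2) ((cE))) ((cE))) ((cEE))) (Var 0)) (Var 2)))) 0 v) else None)" by (simp add: cD1_def)

definition cDE :: dterm where "cDE = Lam (Lam (Var 0))"
lemma cDE_closed[simp]: "closed_at k cDE" by (simp add: cDE_def)
lemma cDE_subst[simp]: "subst cDE j v = cDE" by (simp add: subst_closed)
lemma cDE_lift[simp]: "lift j cDE = cDE" by (simp add: lift_closed)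
lemma cDE_val[simp]: "is_val cDE" by (simp add: cDE_def)
lemma cDE_det[simp]: "det_term cDE" by (simp add: cDE_def)
lemma cDE_red[simp]: "red (App cDE v) = (if is_val v then Some (subst (Lam (Var 0)) 0 v) else None)" by (simp add: cDE_def)

definition cDB :: dterm where "cDB = Lam (Lam (Lam (App (App (App (App (App (Var 1) ((cD0))) ((cD1))) ((cDE))) (Var 2)) (Var 0))))"
lemma cDB_closed[simp]: "closed_at k cDB" by (simp add: cDB_def)
lemma cDB_subst[simp]: "subst cDB j v = cDB" by (simp add: subst_closed)
lemma cDB_lift[simp]: "lift j cDB = cDB" by (simp add: lift_closed)
lemma cDB_val[simp]: "is_val cDB" by (simp add: cDB_def)
lemma cDB_det[simp]: "det_term cDB" by (simp add: cDB_def)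
lemma cDB_red[simp]: "red (App cDB v) = (if is_val v then Some (subst (Lam (Lam (App (App (App (App (App (Var 1) ((cD0))) ((cD1))) ((cDE))) (Var 2)) (Var 0)))) 0 v) else None)" by (simp add: cDB_def)

definition cI0 :: dterm where "cI0 = Lam (Lam (Lam (App (Var 0) (lams 3 (App (Var 1) (Var 5))))))"
lemma cI0_closed[simp]: "closed_at k cI0" by (simp add: cI0_def)
lemma cI0_subst[simp]: "subst cI0 j v = cI0" by (simp add: subst_closed)
lemma cI0_lift[simp]: "lift j cI0 = cI0" by (simp add: lift_closed)
lemma cI0_val[simp]: "is_val cI0" by (simp add: cI0_def)
lemma cI0_det[simp]: "det_term cI0" by (simp add: cI0_def)
lemma cI0_red[simp]: "red (App cI0 v) = (if is_val v then Some (subst (Lam (Lam (App (Var 0) (lams 3 (App (Var 1) (Var 5)))))) 0 v) else None)" by (simp add: cI0_def)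

definition cI1 :: dterm where "cI1 = Lam (Lam (Lam (App (App (App (Var 1) (Var 1)) (Var 2)) (Lam (App (Var 1) (lams 3 (App (Var 2) (Var 3))))))))"
lemma cI1_closed[simp]: "closed_at k cI1" by (simp add: cI1_def)
lemma cI1_subst[simp]: "subst cI1 j v = cI1" by (simp add: subst_closed)
lemma cI1_lift[simp]: "lift j cI1 = cI1" by (simp add: lift_closed)
lemma cI1_val[simp]: "is_val cI1" by (simp add: cI1_def)
lemma cI1_det[simp]: "det_term cI1" by (simp add: cI1_def)
lemma cI1_red[simp]: "red (App cI1 v) = (if is_val v then Some (subst (Lam (Lam (App (App (App (Var 1) (Var 1)) (Var 2)) (Lam (App (Var 1) (lams 3 (App (Var 2) (Var 3)))))))) 0 v) else None)" by (simp add: cI1_def)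

definition cIE :: dterm where "cIE = Lam (Lam (App (Var 0) (lams 3 (App (Var 1) ((enc_str 2 []))))))"
lemma cIE_closed[simp]: "closed_at k cIE" by (simp add: cIE_def)
lemma cIE_subst[simp]: "subst cIE j v = cIE" by (simp add: subst_closed)
lemma cIE_lift[simp]: "lift j cIE = cIE" by (simp add: lift_closed)
lemma cIE_val[simp]: "is_val cIE" by (simp add: cIE_def)
lemma cIE_det[simp]: "det_term cIE" by (simp add: cIE_def)
lemma cIE_red[simp]: "red (App cIE v) = (if is_val v then Some (subst (Lam (App (Var 0) (lams 3 (App (Var 1) ((enc_str 2 [])))))) 0 v) else None)" by (simp add: cIE_def)

definition cIB :: dterm where "cIB = Lam (Lam (Lam (App (App (App (App (App (Var 1) ((cI0))) ((cI1))) ((cIE))) (Var 2)) (Var 0))))"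
lemma cIB_closed[simp]: "closed_at k cIB" by (simp add: cIB_def)
lemma cIB_subst[simp]: "subst cIB j v = cIB" by (simp add: subst_closed)
lemma cIB_lift[simp]: "lift j cIB = cIB" by (simp add: lift_closed)
lemma cIB_val[simp]: "is_val cIB" by (simp add: cIB_def)
lemma cIB_det[simp]: "det_term cIB" by (simp add: cIB_def)
lemma cIB_red[simp]: "red (App cIB v) = (if is_val v then Some (subst (Lam (Lam (App (App (App (App (App (Var 1) ((cI0))) ((cI1))) ((cIE))) (Var 2)) (Var 0)))) 0 v) else None)" by (simp add: cIB_def)

definition cTE0 :: dterm where "cTE0 = Lam (Lam (Lam ((enc_char 4 0))))"
lemma cTE0_closed[simp]: "closed_at k cTE0" by (simp add: cTE0_def)
lemma cTE0_subst[simp]: "subst cTE0 j v = cTE0" by (simp add: subst_closed)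
lemma cTE0_lift[simp]: "lift j cTE0 = cTE0" by (simp add: lift_closed)
lemma cTE0_val[simp]: "is_val cTE0" by (simp add: cTE0_def)
lemma cTE0_det[simp]: "det_term cTE0" by (simp add: cTE0_def)
lemma cTE0_red[simp]: "red (App cTE0 v) = (if is_val v then Some (subst (Lam (Lam ((enc_char 4 0)))) 0 v) else None)" by (simp add: cTE0_def)

definition cTE1 :: dterm where "cTE1 = Lam (Lam (Lam ((enc_char 4 1))))"
lemma cTE1_closed[simp]: "closed_at k cTE1" by (simp add: cTE1_def)
lemma cTE1_subst[simp]: "subst cTE1 j v = cTE1" by (simp add: subst_closed)
lemma cTE1_lift[simp]: "lift j cTE1 = cTE1" by (simp add: lift_closed)
lemma cTE1_val[simp]: "is_val cTE1" by (simp add: cTE1_def)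
lemma cTE1_det[simp]: "det_term cTE1" by (simp add: cTE1_def)
lemma cTE1_red[simp]: "red (App cTE1 v) = (if is_val v then Some (subst (Lam (Lam ((enc_char 4 1)))) 0 v) else None)" by (simp add: cTE1_def)

definition cTE2 :: dterm where "cTE2 = Lam (Lam (Lam ((enc_char 4 2))))"
lemma cTE2_closed[simp]: "closed_at k cTE2" by (simp add: cTE2_def)
lemma cTE2_subst[simp]: "subst cTE2 j v = cTE2" by (simp add: subst_closed)
lemma cTE2_lift[simp]: "lift j cTE2 = cTE2" by (simp add: lift_closed)
lemma cTE2_val[simp]: "is_val cTE2" by (simp add: cTE2_def)
lemma cTE2_det[simp]: "det_term cTE2" by (simp add: cTE2_def)
lemma cTE2_red[simp]: "red (App cTE2 v) = (if is_val v then Some (subst (Lam (Lam ((enc_char 4 2)))) 0 v) else None)" by (simp add: cTE2_def)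

definition cTE3 :: dterm where "cTE3 = Lam (Lam (Lam ((enc_char 4 3))))"
lemma cTE3_closed[simp]: "closed_at k cTE3" by (simp add: cTE3_def)
lemma cTE3_subst[simp]: "subst cTE3 j v = cTE3" by (simp add: subst_closed)
lemma cTE3_lift[simp]: "lift j cTE3 = cTE3" by (simp add: lift_closed)
lemma cTE3_val[simp]: "is_val cTE3" by (simp add: cTE3_def)
lemma cTE3_det[simp]: "det_term cTE3" by (simp add: cTE3_def)
lemma cTE3_red[simp]: "red (App cTE3 v) = (if is_val v then Some (subst (Lam (Lam ((enc_char 4 3)))) 0 v) else None)" by (simp add: cTE3_def)

definition cT :: dterm where "cT = Lam (Lam (Lam (Lam (App (App (App ((cDB)) ((cDB))) (Var 0)) (Lam (App (App (App (Var 2) (Var 2)) (Var 0)) (Var 3)))))))"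
lemma cT_closed[simp]: "closed_at k cT" by (simp add: cT_def)
lemma cT_subst[simp]: "subst cT j v = cT" by (simp add: subst_closed)
lemma cT_lift[simp]: "lift j cT = cT" by (simp add: lift_closed)
lemma cT_val[simp]: "is_val cT" by (simp add: cT_def)
lemma cT_det[simp]: "det_term cT" by (simp add: cT_def)
lemma cT_red[simp]: "red (App cT v) = (if is_val v then Some (subst (Lam (Lam (Lam (App (App (App ((cDB)) ((cDB))) (Var 0)) (Lam (App (App (App (Var 2) (Var 2)) (Var 0)) (Var 3))))))) 0 v) else None)" by (simp add: cT_def)

definition cR0 :: dterm where "cR0 = Lam (Lam (Lam (App (App (App (App (App (App (Var 0) ((cT))) ((cT))) ((cTE0))) (Var 2)) (Var 1)) (Var 0))))"
lemma cR0_closed[simp]: "closed_at k cR0" by (simp add: cR0_def)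
lemma cR0_subst[simp]: "subst cR0 j v = cR0" by (simp add: subst_closed)
lemma cR0_lift[simp]: "lift j cR0 = cR0" by (simp add: lift_closed)
lemma cR0_val[simp]: "is_val cR0" by (simp add: cR0_def)
lemma cR0_det[simp]: "det_term cR0" by (simp add: cR0_def)
lemma cR0_red[simp]: "red (App cR0 v) = (if is_val v then Some (subst (Lam (Lam (App (App (App (App (App (App (Var 0) ((cT))) ((cT))) ((cTE0))) (Var 2)) (Var 1)) (Var 0)))) 0 v) else None)" by (simp add: cR0_def)

definition cR1 :: dterm where "cR1 = Lam (Lam (Lam (App (App (App (App (App (App (Var 0) ((cT))) ((cT))) ((cTE1))) (Var 2)) (Var 1)) (Var 0))))"
lemma cR1_closed[simp]: "closed_at k cR1" by (simp add: cR1_def)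
lemma cR1_subst[simp]: "subst cR1 j v = cR1" by (simp add: subst_closed)
lemma cR1_lift[simp]: "lift j cR1 = cR1" by (simp add: lift_closed)
lemma cR1_val[simp]: "is_val cR1" by (simp add: cR1_def)
lemma cR1_det[simp]: "det_term cR1" by (simp add: cR1_def)
lemma cR1_red[simp]: "red (App cR1 v) = (if is_val v then Some (subst (Lam (Lam (App (App (App (App (App (App (Var 0) ((cT))) ((cT))) ((cTE1))) (Var 2)) (Var 1)) (Var 0)))) 0 v) else None)" by (simp add: cR1_def)

definition cR2 :: dterm where "cR2 = Lam (Lam (Lam (App (App (App (App (App (App (Var 0) ((cT))) ((cT))) ((cTE2))) (Var 2)) (Var 1)) (Var 0))))"
lemma cR2_closed[simp]: "closed_at k cR2" by (simp add: cR2_def)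
lemma cR2_subst[simp]: "subst cR2 j v = cR2" by (simp add: subst_closed)
lemma cR2_lift[simp]: "lift j cR2 = cR2" by (simp add: lift_closed)
lemma cR2_val[simp]: "is_val cR2" by (simp add: cR2_def)
lemma cR2_det[simp]: "det_term cR2" by (simp add: cR2_def)
lemma cR2_red[simp]: "red (App cR2 v) = (if is_val v then Some (subst (Lam (Lam (App (App (App (App (App (App (Var 0) ((cT))) ((cT))) ((cTE2))) (Var 2)) (Var 1)) (Var 0)))) 0 v) else None)" by (simp add: cR2_def)

definition cR3 :: dterm where "cR3 = Lam (Lam (Lam (App (App (App (App (App (App (Var 0) ((cT))) ((cT))) ((cTE3))) (Var 2)) (Var 1)) (Var 0))))"
lemma cR3_closed[simp]: "closed_at k cR3" by (simp add: cR3_def)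
lemma cR3_subst[simp]: "subst cR3 j v = cR3" by (simp add: subst_closed)
lemma cR3_lift[simp]: "lift j cR3 = cR3" by (simp add: lift_closed)
lemma cR3_val[simp]: "is_val cR3" by (simp add: cR3_def)
lemma cR3_det[simp]: "det_term cR3" by (simp add: cR3_def)
lemma cR3_red[simp]: "red (App cR3 v) = (if is_val v then Some (subst (Lam (Lam (App (App (App (App (App (App (Var 0) ((cT))) ((cT))) ((cTE3))) (Var 2)) (Var 1)) (Var 0)))) 0 v) else None)" by (simp add: cR3_def)

definition cRE :: dterm where "cRE = Lam (Lam (Var 1))"
lemma cRE_closed[simp]: "closed_at k cRE" by (simp add: cRE_def)
lemma cRE_subst[simp]: "subst cRE j v = cRE" by (simp add: subst_closed)
lemma cRE_lift[simp]: "lift j cRE = cRE" by (simp add: lift_closed)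
lemma cRE_val[simp]: "is_val cRE" by (simp add: cRE_def)
lemma cRE_det[simp]: "det_term cRE" by (simp add: cRE_def)
lemma cRE_red[simp]: "red (App cRE v) = (if is_val v then Some (subst (Lam (Var 1)) 0 v) else None)" by (simp add: cRE_def)

definition cRB :: dterm where "cRB = Lam (Lam (Lam (App (App (App (App (App (App (App (Var 0) ((cR0))) ((cR1))) ((cR2))) ((cR3))) ((cRE))) (Var 2)) (Var 1))))"
lemma cRB_closed[simp]: "closed_at k cRB" by (simp add: cRB_def)
lemma cRB_subst[simp]: "subst cRB j v = cRB" by (simp add: subst_closed)
lemma cRB_lift[simp]: "lift j cRB = cRB" by (simp add: lift_closed)
lemma cRB_val[simp]: "is_val cRB" by (simp add: cRB_def)
lemma cRB_det[simp]: "det_term cRB" by (simp add: cRB_def)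
lemma cRB_red[simp]: "red (App cRB v) = (if is_val v then Some (subst (Lam (Lam (App (App (App (App (App (App (App (Var 0) ((cR0))) ((cR1))) ((cR2))) ((cR3))) ((cRE))) (Var 2)) (Var 1)))) 0 v) else None)" by (simp add: cRB_def)

fun MV :: "nat \<Rightarrow> mv \<Rightarrow> work \<Rightarrow> nat \<Rightarrow> dterm" where
  "MV Q MStay a s = Lam (Lam (Lam (Lam (Lam (Lam (App (App (App (Var 1) (Var 1)) (Var 0)) (Lam (App (App (App (App (App (App (Var 0) (Var 6)) (Var 5)) (Var 4)) ((enc_char 3 (work_idx a)))) (Var 3)) ((enc_char Q s))))))))))"
| "MV Q MLeft a s = Lam (Lam (Lam (Lam (Lam (App (App (App (App (App (App (App (App (Var 2) (Lam (Lam (Lam (Lam (Lam (Lam (App (App (App (Var 1) (Var 1)) (Var 0)) (Lam (App (App (App (App (App (App (Var 0) (Var 5)) (Var 4)) (Var 6)) ((enc_char 3 0))) (lams 4 (App (Var (3 - work_idx a)) (Var 7)))) ((enc_char Q s)))))))))))) (Lam (Lam (Lam (Lam (Lam (Lam (App (App (App (Var 1) (Var 1)) (Var 0)) (Lam (App (App (App (App (App (App (Var 0) (Var 5)) (Var 4)) (Var 6)) ((enc_char 3 1))) (lams 4 (App (Var (3 - work_idx a)) (Var 7)))) ((enc_char Q s)))))))))))) (Lam (Lam (Lam (Lam (Lam (Lam (App (App (App (Var 1) (Var 1)) (Var 0)) (Lam (App (App (App (App (App (App (Var 0) (Var 5)) (Var 4)) (Var 6)) ((enc_char 3 2))) (lams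 4 (App (Var (3 - work_idx a)) (Var 7)))) ((enc_char Q s)))))))))))) (Lam (Lam (Lam (Lam (Lam (App (App (App (Var 1) (Var 1)) (Var 0)) (Lam (App (App (App (App (App (App (Var 0) (Var 5)) (Var 4)) ((enc_str 3 []))) ((enc_char 3 2))) (lams 4 (App (Var (3 - work_idx a)) (Var 7)))) ((enc_char Q s))))))))))) (Var 4)) (Var 3)) (Var 1)) (Var 0))))))"
| "MV Q MRight a s = Lam (Lam (Lam (Lam (Lam (App (App (App (App (App (App (App (App (Var 1) (Lam (Lam (Lam (Lam (Lam (Lam (App (App (App (Var 1) (Var 1)) (Var 0)) (Lam (App (App (App (App (App (App (Var 0) (Var 5)) (Var 4)) (lams 4 (App (Var (3 - work_idx a)) (Var 7)))) ((enc_char 3 0))) (Var 6)) ((enc_char Q s)))))))))))) (Lam (Lam (Lam (Lam (Lam (Lam (App (App (App (Var 1) (Var 1)) (Var 0)) (Lam (App (App (App (App (App (App (Var 0) (Var 5)) (Var 4)) (lams 4 (App (Var (3 - work_idx a)) (Var 7)))) ((enc_char 3 1))) (Var 6)) ((enc_char Q s)))))))))))) (Lam (Lam (Lam (Lam (Lam (Lam (App (App (App (Var 1) (Var 1)) (Var 0)) (Lam (App (App (App (App (App (App (Var 0) (Var 5)) (Var 4)) (lams 4 (App (Var (3 - work_idx a)) (Var 7)))) ((enc_char 3 2))) (Var 6)) ((enc_char Q s)))))))))))) (Lam (Lam (Lam (Lam (Lam (App (App (App (Var 1) (Var 1)) (Var 0)) (Lam (App (App (App (App (App (App (Var 0) (Var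 5)) (Var 4)) (lams 4 (App (Var (3 - work_idx a)) (Var 7)))) ((enc_char 3 2))) ((enc_str 3 []))) ((enc_char Q s))))))))))) (Var 4)) (Var 3)) (Var 2)) (Var 0))))))"

fun AH :: "nat \<Rightarrow> (int \<times> work \<times> mv \<times> nat) option \<Rightarrow> dterm" where
  "AH Q None = Lam (Var 0)"
| "AH Q (Some (d, a, mu, s)) = (if d = 1 then Lam (Lam (Lam (Lam (Lam (App (App (App ((cIB)) ((cIB))) (Var 3)) (Lam (App (App (App (App (App ((MV Q mu a s)) (Var 5)) (Var 0)) (Var 3)) (Var 2)) (Var 1)))))))) else if d = -1 then Lam (Lam (Lam (Lam (Lam (App (App (App ((cDB)) ((cDB))) (Var 3)) (Lam (App (App (App (App (App ((MV Q mu a s)) (Var 5)) (Var 0)) (Var 3)) (Var 2)) (Var 1)))))))) else Lam (Lam (Lam (Lam (Lam (App (App (App (App (App ((MV Q mu a s)) (Var 4)) (Var 3)) (Var 2)) (Var 1)) (Var 0)))))))"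

definition BH :: "tm \<Rightarrow> inp \<Rightarrow> nat \<Rightarrow> dterm" where "BH M b j = Lam (Lam (Lam (Lam (Lam (Lam (App (App (App (App (App (App (App (App (Var 2) ((AH (nstates M) (delta M b W0 j)))) ((AH (nstates M) (delta M b W1 j)))) ((AH (nstates M) (delta M b WB j)))) (Var 5)) (Var 4)) (Var 3)) (Var 1)) (Var 0)))))))"
definition HF :: "tm \<Rightarrow> nat \<Rightarrow> dterm" where "HF M j = Lam (Lam (Lam (Lam (Lam (Lam (Lam (App (Var 0) (Lam (App (App (App (App (App (App (Var 0) (Var 7)) (Var 6)) (Var 5)) (Var 4)) (Var 3)) ((enc_char (nstates M) j)))))))))))"
definition HN :: "tm \<Rightarrow> nat \<Rightarrow> dterm" where "HN M j = Lam (Lam (Lam (Lam (Lam (Lam (App (App (App (App (App (App (App (App (App (App (App (App (App ((cRB)) ((cRB))) (Var 4)) (Var 5)) ((BH M I0 j))) ((BH M I1 j))) ((BH M IL j))) ((BH M IR j))) (Var 5)) (Var 4)) (Var 3)) (Var 2)) (Var 1)) (Var 0)))))))"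




lemma closed_any: "closed_at 0 t \<Longrightarrow> closed_at j t"
  using closed_mono by blast

lemma bin_even: "q > 0 \<Longrightarrow> bin (2*q) = 0 # bin q" by (simp add: bin_pos)
lemma bin_1[simp]: "bin (Suc 0) = [1]" by (simp add: bin_pos)
lemma bin_odd: "bin (2*q+1) = 1 # bin q" by (simp add: bin_pos)

lemma DEC: "n > 0 \<Longrightarrow> closed_at 0 k \<Longrightarrow> is_val k \<Longrightarrow>
  \<exists>m. steps m (apps cDB [cDB, enc_str 2 (bin n), k]) (App k (enc_str 2 (bin (n-1)))) \<and> m \<le> 15 * length (bin n)"
proof (induction n arbitrary: k rule: less_induct)
  case (less n)
  note kc = less.prems(2) and kv = less.prems(3)
  obtain q b where nq: "n = 2*q + b" "b < 2" by (metis mod_less_divisor mult_div_mod_eq zero_less_numeral)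
  show ?case
  proof (cases "b = 0")
    case True
    with nq less.prems have q0: "q > 0" by simp
    have bn: "bin n = 0 # bin q" using nq True q0 bin_even by simp
    define K' where "K' = Lam (App k (lams 3 (App (Var 1) (Var 3))))"
    have K'c: "closed_at 0 K'" "is_val K'" using kc by (auto simp: K'_def closed_any)
    have s1: "steps 9 (apps cDB [cDB, enc_str 2 (bin n), k]) (apps cDB [cDB, enc_str 2 (bin q), K'])"
      by (rule run_steps) (simp add: bn subst_closed[OF kc] lift_closed[OF kc] kv K'_def)
    obtain m' where m': "steps m' (apps cDB [cDB, enc_str 2 (bin q), K']) (App K' (enc_str 2 (bin (q-1))))"
       "m' \<le> 15 * length (bin q)"
      using less.IH[of q K'] q0 K'c nq by auto
    have "n - Suc 0 = 2 * (q - 1) + 1" using nq True q0 by simp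
    then have bq: "bin (n - Suc 0) = 1 # bin (q - 1)" using bin_odd by simp
    have s3: "steps 1 (App K' (enc_str 2 (bin (q-1)))) (App k (enc_str 2 (bin (n-1))))"
      by (rule run_steps) (simp add: bq K'_def subst_closed[OF kc] lift_closed[OF kc])
    have "steps (9 + m' + 1) (apps cDB [cDB, enc_str 2 (bin n), k]) (App k (enc_str 2 (bin (n-1))))"
      using steps_trans[OF steps_trans[OF s1 m'(1)] s3] .
    moreover have "9 + m' + 1 \<le> 15 * length (bin n)" using m'(2) nq True q0 by (simp add: bin_even)
    ultimately show ?thesis by blast
  next
    case False
    then have b1: "b = 1" using nq by simp
    show ?thesis
    proof (cases "q = 0")
      case True
      have "steps 14 (apps cDB [cDB, enc_str 2 (bin n), k]) (App k (enc_str 2 (bin (n-1))))"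
        by (rule run_steps) (simp add: nq b1 True bin_odd subst_closed[OF kc] lift_closed[OF kc] kv)
      moreover have "14 \<le> 15 * length (bin n)" using nq b1 True by (simp add: bin_odd)
      ultimately show ?thesis by blast
    next
      case False
      then have q0: "q > 0" by simp
      have bn1: "bin (n - Suc 0) = 0 # bin q" using nq b1 q0 by (simp add: bin_even)
      have bn: "bin n = 1 # bin q" using nq b1 bin_odd by simp
      have "steps 15 (apps cDB [cDB, enc_str 2 (bin n), k]) (App k (enc_str 2 (bin (n-1))))"
      proof (cases "q mod 2 = 0")
        case True
        then show ?thesis
          by (intro run_steps) (simp add: bn1 bn bin_pos[OF q0] subst_closed[OF kc] lift_closed[OF kc] kv)
      next
        case False
        then have "q mod 2 = 1" by simp
        then show ?thesis
          by (intro run_steps) (simp add: bn1 bn bin_pos[OF q0] subst_closed[OF kc] lift_closed[OF kc] kv)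
      qed
      moreover have "15 \<le> 15 * length (bin n)" using bn by simp
      ultimately show ?thesis by blast
    qed
  qed
qed

lemma INC: "closed_at 0 k \<Longrightarrow> is_val k \<Longrightarrow>
  \<exists>m. steps m (apps cIB [cIB, enc_str 2 (bin n), k]) (App k (enc_str 2 (bin (Suc n)))) \<and> m \<le> 10 * (length (bin n) + 1)"
proof (induction n arbitrary: k rule: less_induct)
  case (less n)
  note kc = less.prems(1) and kv = less.prems(2)
  obtain q b where nq: "n = 2*q + b" "b < 2" by (metis mod_less_divisor mult_div_mod_eq zero_less_numeral)
  show ?case
  proof (cases "n = 0")
    case True
    have "steps 8 (apps cIB [cIB, enc_str 2 (bin n), k]) (App k (enc_str 2 (bin (Suc n))))"
      by (rule run_steps) (simp add: True subst_closed[OF kc] lift_closed[OF kc] kv)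
    then show ?thesis by (intro exI[of _ 8]) simp
  next
    case False
    show ?thesis
    proof (cases "b = 0")
      case True
      with nq False have q0: "q > 0" by simp
      have bn: "bin n = 0 # bin q" using nq True q0 bin_even by simp
      have bs: "bin (Suc n) = 1 # bin q" using nq True bin_odd by simp
      have "steps 9 (apps cIB [cIB, enc_str 2 (bin n), k]) (App k (enc_str 2 (bin (Suc n))))"
        by (rule run_steps) (simp add: bn bs subst_closed[OF kc] lift_closed[OF kc] kv)
      then show ?thesis by (intro exI[of _ 9]) (simp add: bn)
    next
      case False
      then have b1: "b = 1" using nq by simp
      have bn: "bin n = 1 # bin q" using nq b1 bin_odd by simp
      have bs: "bin (Suc n) = 0 # bin (Suc q)" using nq b1 bin_even[of "Suc q"] by simp
      define K' where "K' = Lam (App k (lams 3 (App (Var 2) (Var 3))))"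
      have K'c: "closed_at 0 K'" "is_val K'" using kc by (auto simp: K'_def closed_any)
      have s1: "steps 9 (apps cIB [cIB, enc_str 2 (bin n), k]) (apps cIB [cIB, enc_str 2 (bin q), K'])"
        by (rule run_steps) (simp add: bn subst_closed[OF kc] lift_closed[OF kc] kv K'_def)
      obtain m' where m': "steps m' (apps cIB [cIB, enc_str 2 (bin q), K']) (App K' (enc_str 2 (bin (Suc q))))"
         "m' \<le> 10 * (length (bin q) + 1)"
        using less.IH[of q K'] K'c nq b1 by auto
      have s3: "steps 1 (App K' (enc_str 2 (bin (Suc q)))) (App k (enc_str 2 (bin (Suc n))))"
        by (rule run_steps) (simp add: bs K'_def subst_closed[OF kc] lift_closed[OF kc])
      have "steps (9 + m' + 1) (apps cIB [cIB, enc_str 2 (bin n), k]) (App k (enc_str 2 (bin (Suc n))))"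
        using steps_trans[OF steps_trans[OF s1 m'(1)] s3] .
      moreover have "9 + m' + 1 \<le> 10 * (length (bin n) + 1)" using m'(2) bn by simp
      ultimately show ?thesis by blast
    qed
  qed
qed

lemma bin_len_mono: "m \<le> n \<Longrightarrow> length (bin m) \<le> length (bin n)"
proof (induction n arbitrary: m rule: less_induct)
  case (less n)
  show ?case
  proof (cases "m = 0")
    case True then show ?thesis by simp
  next
    case False
    then have "n > 0" using less by simp
    moreover have "m div 2 \<le> n div 2" using less.prems div_le_mono by blast
    moreover have "n div 2 < n" using \<open>n > 0\<close> by simp
    ultimately show ?thesis using less.IH[of "n div 2" "m div 2"] False by (simp add: bin_pos)
  qed
qed

lemma READ: "n < length xs \<Longrightarrow>
  \<exists>m. steps m (apps cRB [cRB, enc_str 2 (bin n), enc_str 4 (map inp_idx xs)]) (enc_char 4 (inp_idx (xs ! n)))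
     \<and> m \<le> (n + 1) * (40 + 15 * length (bin n))"
proof (induction n arbitrary: xs)
  case 0
  then obtain x xs' where xs: "xs = x # xs'" by (cases xs) auto
  have "steps 17 (apps cRB [cRB, enc_str 2 (bin 0), enc_str 4 (map inp_idx xs)]) (enc_char 4 (inp_idx (xs ! 0)))"
    by (cases x; intro run_steps; simp add: xs)
  then show ?case by (intro exI[of _ 17]) simp
next
  case (Suc n)
  then obtain x xs' where xs: "xs = x # xs'" by (cases xs) auto
  have nl: "n < length xs'" using Suc xs by simp
  define K where "K = Lam (App (App (App cRB cRB) (Var 0)) (enc_str 4 (map inp_idx xs')))"
  have Kc: "closed_at 0 K" "is_val K" by (auto simp: K_def)
  have bS: "bin (Suc n) = (Suc n mod 2) # bin (Suc n div 2)" by (simp add: bin_pos)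
  have s1: "steps 18 (apps cRB [cRB, enc_str 2 (bin (Suc n)), enc_str 4 (map inp_idx xs)])
        (apps cDB [cDB, enc_str 2 (bin (Suc n)), K])"
    by (cases x; cases "Suc n mod 2 = 0"; intro run_steps; simp add: xs bS K_def)
  obtain md where md: "steps md (apps cDB [cDB, enc_str 2 (bin (Suc n)), K]) (App K (enc_str 2 (bin n)))"
    "md \<le> 15 * length (bin (Suc n))"
    using DEC[of "Suc n" K] Kc by auto
  have s3: "steps 1 (App K (enc_str 2 (bin n))) (apps cRB [cRB, enc_str 2 (bin n), enc_str 4 (map inp_idx xs')])"
    by (rule run_steps) (simp add: K_def)
  obtain mr where mr: "steps mr (apps cRB [cRB, enc_str 2 (bin n), enc_str 4 (map inp_idx xs')]) (enc_char 4 (inp_idx (xs' ! n)))"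
    "mr \<le> (n + 1) * (40 + 15 * length (bin n))"
    using Suc.IH[OF nl] by auto
  have "steps (18 + md + 1 + mr) (apps cRB [cRB, enc_str 2 (bin (Suc n)), enc_str 4 (map inp_idx xs)]) (enc_char 4 (inp_idx (xs ! Suc n)))"
    using steps_trans[OF steps_trans[OF steps_trans[OF s1 md(1)] s3] mr(1)] xs by simp
  moreover have "18 + md + 1 + mr \<le> (Suc n + 1) * (40 + 15 * length (bin (Suc n)))"
  proof -
    have "length (bin n) \<le> length (bin (Suc n))" by (rule bin_len_mono) simp
    then have h: "(n + 1) * (40 + 15 * length (bin n)) \<le> (n + 1) * (40 + 15 * length (bin (Suc n)))"
      by (intro mult_le_mono2) simp
    have e: "(Suc n + 1) * (40 + 15 * length (bin (Suc n))) = (40 + 15 * length (bin (Suc n))) + (n + 1) * (40 + 15 * length (bin (Suc n)))"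
      by simp
    show ?thesis unfolding e using md(2) mr(2) h by linarith
  qed
  ultimately show ?case by blast
qed




lemma MV_closed[simp]: "s < Q \<Longrightarrow> closed_at k (MV Q mu a s)" by (cases mu; cases a) simp_all
lemma MV_subst[simp]: "s < Q \<Longrightarrow> subst (MV Q mu a s) j v = MV Q mu a s" by (simp add: subst_closed)
lemma MV_lift[simp]: "s < Q \<Longrightarrow> lift j (MV Q mu a s) = MV Q mu a s" by (simp add: lift_closed)
lemma MV_val[simp]: "is_val (MV Q mu a s)" by (cases mu) simp_all
lemma MV_det[simp]: "s < Q \<Longrightarrow> det_term (MV Q mu a s)" by (cases mu) simp_all

lemma MV_move:
  assumes sQ: "s < Q" and Ic: "closed_at 0 I" "is_val I" and Nc: "closed_at 0 N" "is_val N"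
    and Tc: "closed_at 0 T" "is_val T"
    and mw: "move_work mu wl a wr = (wl', a'', wr')"
  shows "\<exists>m. steps m (apps (MV Q mu a s) [I, N, enc_str 3 (map work_idx (rev wl)), enc_str 3 (map work_idx wr), T])
     (Lam (apps T [T, Var 0, Lam (apps (Var 0) [I, N, enc_str 3 (map work_idx (rev wl')),
         enc_char 3 (work_idx a''), enc_str 3 (map work_idx wr'), enc_char Q s])])) \<and> m \<le> 14"
proof -
  note S = subst_closed[OF Ic(1)] subst_closed[OF Nc(1)] subst_closed[OF Tc(1)]
     lift_closed[OF Ic(1)] lift_closed[OF Nc(1)] lift_closed[OF Tc(1)] Ic(2) Nc(2) Tc(2) sQ
  show ?thesis
  proof (cases mu)
    case MStay
    then show ?thesis using mw
      by (cases a; (clarsimp, intro exI[of _ 5] conjI run_steps; simp add: S))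
  next
    case MLeft
    show ?thesis
    proof (cases wl rule: rev_cases)
      case Nil
      then show ?thesis using mw MLeft
        by (cases a; (clarsimp, intro exI[of _ 13] conjI run_steps; simp add: S))
    next
      case (snoc ys y)
      then show ?thesis using mw MLeft
        by (cases a; cases y; (clarsimp, intro exI[of _ 14] conjI run_steps; simp add: S))
    qed
  next
    case MRight
    show ?thesis
    proof (cases wr)
      case Nil
      then show ?thesis using mw MRight
        by (cases a; (clarsimp, intro exI[of _ 13] conjI run_steps; simp add: S))
    next
      case (Cons y ys)
      then show ?thesis using mw MRight
        by (cases a; cases y; (clarsimp, intro exI[of _ 14] conjI run_steps; simp add: S))
    qed
  qed
qed

lemma wf_delta: "wf_tm M \<Longrightarrow> delta M b a j = Some (d, a', mu, s') \<Longrightarrow>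
   s' < nstates M \<and> d \<in> {-1, 0, 1} \<and> j < nstates M \<and> j \<noteq> s_T M \<and> j \<noteq> s_F M"
  unfolding wf_tm_def by blast

lemma AH_closed: "(\<forall>d a mu s. r = Some (d,a,mu,s) \<longrightarrow> s < Q) \<Longrightarrow> closed_at k (AH Q r)"
  by (cases r) auto
lemma AH_det: "(\<forall>d a mu s. r = Some (d,a,mu,s) \<longrightarrow> s < Q) \<Longrightarrow> det_term (AH Q r)"
  by (cases r) auto
lemma AH_val[simp]: "is_val (AH Q r)"
  by (cases r) auto
lemma AHd_closed[simp]: "wf_tm M \<Longrightarrow> closed_at k (AH (nstates M) (delta M b a j))"
  by (rule AH_closed) (use wf_delta in blast)
lemma AHd_det[simp]: "wf_tm M \<Longrightarrow> det_term (AH (nstates M) (delta M b a j))"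
  by (rule AH_det) (use wf_delta in blast)
lemma AHd_subst[simp]: "wf_tm M \<Longrightarrow> subst (AH (nstates M) (delta M b a j)) i v = AH (nstates M) (delta M b a j)"
  by (simp add: subst_closed)
lemma AHd_lift[simp]: "wf_tm M \<Longrightarrow> lift i (AH (nstates M) (delta M b a j)) = AH (nstates M) (delta M b a j)"
  by (simp add: lift_closed)

lemma BH_closed[simp]: "wf_tm M \<Longrightarrow> closed_at k (BH M b j)" by (simp add: BH_def)
lemma BH_det[simp]: "wf_tm M \<Longrightarrow> det_term (BH M b j)" by (simp add: BH_def)
lemma BH_val[simp]: "is_val (BH M b j)" by (simp add: BH_def)
lemma BH_subst[simp]: "wf_tm M \<Longrightarrow> subst (BH M b j) i v = BH M b j" by (simp add: subst_closed)
lemma BH_lift[simp]: "wf_tm M \<Longrightarrow> lift i (BH M b j) = BH M b j" by (simp add: lift_closed)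

lemma HF_closed[simp]: "j < nstates M \<Longrightarrow> closed_at k (HF M j)" by (simp add: HF_def)
lemma HF_det[simp]: "j < nstates M \<Longrightarrow> det_term (HF M j)" by (simp add: HF_def)
lemma HF_val[simp]: "is_val (HF M j)" by (simp add: HF_def)

lemma HN_closed[simp]: "wf_tm M \<Longrightarrow> closed_at k (HN M j)" by (simp add: HN_def)
lemma HN_det[simp]: "wf_tm M \<Longrightarrow> det_term (HN M j)" by (simp add: HN_def)
lemma HN_val[simp]: "is_val (HN M j)" by (simp add: HN_def)

definition HH :: "tm \<Rightarrow> nat \<Rightarrow> dterm" where
  "HH M j = (if j = s_T M \<or> j = s_F M then HF M j else HN M j)"

lemma HH_closed[simp]: "wf_tm M \<Longrightarrow> j < nstates M \<Longrightarrow> closed_at k (HH M j)" by (simp add: HH_def)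
lemma HH_det[simp]: "wf_tm M \<Longrightarrow> j < nstates M \<Longrightarrow> det_term (HH M j)" by (simp add: HH_def)
lemma HH_val[simp]: "is_val (HH M j)" by (simp add: HH_def)

definition MAIN :: "tm \<Rightarrow> dterm" where
  "MAIN M = lams 7 (apps (apps (Var 1) (map (HH M) [0..<nstates M])) [Var 6, Var 5, Var 4, Var 3, Var 2, Var 0])"

lemma closed_apps[simp]: "closed_at k (apps t vs) = (closed_at k t \<and> (\<forall>v\<in>set vs. closed_at k v))"
  by (induction vs arbitrary: t) auto
lemma det_apps_iff[simp]: "det_term (apps t vs) = (det_term t \<and> (\<forall>v\<in>set vs. is_val v \<and> det_term v))"
  by (induction vs arbitrary: t) auto

lemma MAIN_closed[simp]: "wf_tm M \<Longrightarrow> closed_at k (MAIN M)"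
  unfolding MAIN_def by (rule closed_lams) auto
lemma MAIN_det[simp]: "wf_tm M \<Longrightarrow> det_term (MAIN M)"
  unfolding MAIN_def by simp
lemma MAIN_val[simp]: "is_val (MAIN M)" by (simp add: MAIN_def)
lemma MAIN_subst[simp]: "wf_tm M \<Longrightarrow> subst (MAIN M) i v = MAIN M" by (simp add: subst_closed)
lemma MAIN_lift[simp]: "wf_tm M \<Longrightarrow> lift i (MAIN M) = MAIN M" by (simp add: lift_closed)

definition TB :: "tm \<Rightarrow> dterm" where
  "TB M = Lam (Lam (Lam (App (App (App (Var 0) (MAIN M)) (Var 2)) (Var 1))))"

lemma TB_closed[simp]: "wf_tm M \<Longrightarrow> closed_at k (TB M)" by (simp add: TB_def)
lemma TB_det[simp]: "wf_tm M \<Longrightarrow> det_term (TB M)" by (simp add: TB_def)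
lemma TB_val[simp]: "is_val (TB M)" by (simp add: TB_def)
lemma TB_subst[simp]: "wf_tm M \<Longrightarrow> subst (TB M) i v = TB M" by (simp add: subst_closed)
lemma TB_lift[simp]: "wf_tm M \<Longrightarrow> lift i (TB M) = TB M" by (simp add: lift_closed)




lemma AH_step:
  assumes sQ: "s < Q" and d: "d \<in> {-1, 0, 1}" and nn: "int n' = int n + d"
    and Ic: "closed_at 0 I" "is_val I" and Lc: "closed_at 0 L" "is_val L"
    and Rc: "closed_at 0 R" "is_val R" and Tc: "closed_at 0 T" "is_val T"
  shows "\<exists>m. steps m (apps (AH Q (Some (d, a, mu, s))) [I, enc_str 2 (bin n), L, R, T])
             (apps (MV Q mu a s) [I, enc_str 2 (bin n'), L, R, T]) \<and> m \<le> 6 + 15 * (length (bin n) + 1)"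
proof -
  note S = subst_closed[OF Ic(1)] subst_closed[OF Lc(1)] subst_closed[OF Rc(1)] subst_closed[OF Tc(1)]
     lift_closed[OF Ic(1)] lift_closed[OF Lc(1)] lift_closed[OF Rc(1)] lift_closed[OF Tc(1)]
     Ic(2) Lc(2) Rc(2) Tc(2) sQ
  define K where "K = Lam (apps (MV Q mu a s) [I, Var 0, L, R, T])"
  have Kc: "closed_at 0 K" "is_val K" using Ic Lc Rc Tc sQ by (auto simp: K_def closed_any)
  consider "d = 0" | "d = 1" | "d = -1" using d by blast
  then show ?thesis
  proof cases
    case 1
    then have "n' = n" using nn by simp
    then have "steps 5 (apps (AH Q (Some (d, a, mu, s))) [I, enc_str 2 (bin n), L, R, T])
             (apps (MV Q mu a s) [I, enc_str 2 (bin n'), L, R, T])"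
      by (intro run_steps) (simp add: 1 S)
    then show ?thesis by (intro exI[of _ 5]) simp
  next
    case 2
    then have n': "n' = Suc n" using nn by simp
    have s1: "steps 5 (apps (AH Q (Some (d, a, mu, s))) [I, enc_str 2 (bin n), L, R, T])
             (apps cIB [cIB, enc_str 2 (bin n), K])"
      by (intro run_steps) (simp add: 2 S K_def)
    obtain m where m: "steps m (apps cIB [cIB, enc_str 2 (bin n), K]) (App K (enc_str 2 (bin (Suc n))))"
      "m \<le> 10 * (length (bin n) + 1)" using INC Kc by blast
    have s3: "steps 1 (App K (enc_str 2 (bin (Suc n)))) (apps (MV Q mu a s) [I, enc_str 2 (bin n'), L, R, T])"
      by (intro run_steps) (simp add: n' S K_def)
    show ?thesis using steps_trans[OF steps_trans[OF s1 m(1)] s3] m(2) by (intro exI[of _ "5 + m + 1"]) simp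
  next
    case 3
    then have n': "n' = n - 1" "n > 0" using nn by simp_all
    have s1: "steps 5 (apps (AH Q (Some (d, a, mu, s))) [I, enc_str 2 (bin n), L, R, T])
             (apps cDB [cDB, enc_str 2 (bin n), K])"
      by (intro run_steps) (simp add: 3 S K_def)
    obtain m where m: "steps m (apps cDB [cDB, enc_str 2 (bin n), K]) (App K (enc_str 2 (bin (n - 1))))"
      "m \<le> 15 * length (bin n)" using DEC Kc n'(2) by blast
    have s3: "steps 1 (App K (enc_str 2 (bin (n - 1)))) (apps (MV Q mu a s) [I, enc_str 2 (bin n'), L, R, T])"
      by (intro run_steps) (simp add: n' S K_def)
    show ?thesis using steps_trans[OF steps_trans[OF s1 m(1)] s3] m(2) by (intro exI[of _ "5 + m + 1"]) simp
  qed
qed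

lemma apps_append: "apps t (xs @ ys) = apps (apps t xs) ys"
  by (induction xs arbitrary: t) auto

lemma dispatch_ctx: "j < p \<Longrightarrow> length fs = p \<Longrightarrow> \<forall>v\<in>set fs. closed_at 0 v \<and> is_val v \<Longrightarrow>
   \<forall>v\<in>set ws. is_val v \<Longrightarrow> steps p (apps (enc_char p j) (fs @ ws)) (apps (fs ! j) ws)"
  unfolding apps_append by (intro steps_apps char_dispatch) auto

lemma BH_step:
  assumes wf: "wf_tm M" and dl: "delta M b a j = Some (d, a', mu, s')" and nn: "int n' = int n + d"
    and Ic: "closed_at 0 I" "is_val I" and Lc: "closed_at 0 L" "is_val L"
    and Rc: "closed_at 0 R" "is_val R" and Tc: "closed_at 0 T" "is_val T"
  shows "\<exists>m. steps m (apps (BH M b j) [I, enc_str 2 (bin n), L, enc_char 3 (work_idx a), R, T])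
             (apps (MV (nstates M) mu a' s') [I, enc_str 2 (bin n'), L, R, T]) \<and> m \<le> 15 + 15 * (length (bin n) + 1)"
proof -
  note S = subst_closed[OF Ic(1)] subst_closed[OF Lc(1)] subst_closed[OF Rc(1)] subst_closed[OF Tc(1)]
     lift_closed[OF Ic(1)] lift_closed[OF Lc(1)] lift_closed[OF Rc(1)] lift_closed[OF Tc(1)]
     Ic(2) Lc(2) Rc(2) Tc(2) wf
  let ?Q = "nstates M"
  let ?fs = "[AH ?Q (delta M b W0 j), AH ?Q (delta M b W1 j), AH ?Q (delta M b WB j)]"
  let ?ws = "[I, enc_str 2 (bin n), L, R, T]"
  have s1: "steps 6 (apps (BH M b j) [I, enc_str 2 (bin n), L, enc_char 3 (work_idx a), R, T])
      (apps (enc_char 3 (work_idx a)) (?fs @ ?ws))"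
    by (intro run_steps) (simp add: S BH_def)
  have s2: "steps 3 (apps (enc_char 3 (work_idx a)) (?fs @ ?ws)) (apps (?fs ! work_idx a) ?ws)"
    using wf Ic Lc Rc Tc by (intro dispatch_ctx) auto
  have fa: "?fs ! work_idx a = AH ?Q (Some (d, a', mu, s'))"
    using dl by (cases a) auto
  have w: "s' < ?Q" "d \<in> {-1, 0, 1}" using wf_delta[OF wf dl] by auto
  obtain m where m: "steps m (apps (AH ?Q (Some (d, a', mu, s'))) ?ws)
             (apps (MV ?Q mu a' s') [I, enc_str 2 (bin n'), L, R, T])" "m \<le> 6 + 15 * (length (bin n) + 1)"
    using AH_step[OF w(1) w(2) nn Ic Lc Rc Tc] by blast
  show ?thesis using steps_trans[OF steps_trans[OF s1 s2] m(1)[folded fa]] m(2)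
    by (intro exI[of _ "6 + 3 + m"]) simp
qed

lemma HN_step:
  assumes wf: "wf_tm M" and nl: "n < length xs" and dl: "delta M (xs ! n) a j = Some (d, a', mu, s')"
    and nn: "int n' = int n + d"
    and Lc: "closed_at 0 L" "is_val L"
    and Rc: "closed_at 0 R" "is_val R" and Tc: "closed_at 0 T" "is_val T"
  shows "\<exists>m. steps m (apps (HN M j) [enc_str 4 (map inp_idx xs), enc_str 2 (bin n), L, enc_char 3 (work_idx a), R, T])
             (apps (MV (nstates M) mu a' s') [enc_str 4 (map inp_idx xs), enc_str 2 (bin n'), L, R, T]) \<and>
          m \<le> 40 + 15 * (length (bin n) + 1) + (n + 1) * (40 + 15 * length (bin n))"
proof -
  let ?I = "enc_str 4 (map inp_idx xs)"
  let ?N = "enc_str 2 (bin n)"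
  let ?A = "enc_char 3 (work_idx a)"
  have Ic: "closed_at 0 ?I" "is_val ?I" by (auto simp: closed_enc_str)
  have Ac: "closed_at 0 ?A" "is_val ?A" by (auto simp: closed_enc_char)
  note S = subst_closed[OF Ic(1)] subst_closed[OF Lc(1)] subst_closed[OF Rc(1)] subst_closed[OF Tc(1)]
     lift_closed[OF Ic(1)] lift_closed[OF Lc(1)] lift_closed[OF Rc(1)] lift_closed[OF Tc(1)]
     Ic(2) Lc(2) Rc(2) Tc(2) wf
  let ?fs = "[BH M I0 j, BH M I1 j, BH M IL j, BH M IR j]"
  let ?ws = "[?I, ?N, L, ?A, R, T]"
  have s1: "steps 6 (apps (HN M j) ?ws) (apps (apps cRB [cRB, ?N, ?I]) (?fs @ ?ws))"
    by (intro run_steps) (simp add: S HN_def)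
  obtain mr where mr: "steps mr (apps cRB [cRB, ?N, ?I]) (enc_char 4 (inp_idx (xs ! n)))"
    "mr \<le> (n + 1) * (40 + 15 * length (bin n))" using READ[OF nl] by blast
  have s2: "steps mr (apps (apps cRB [cRB, ?N, ?I]) (?fs @ ?ws)) (apps (enc_char 4 (inp_idx (xs ! n))) (?fs @ ?ws))"
    using Lc Rc Tc by (intro steps_apps mr(1)) auto
  have s3: "steps 4 (apps (enc_char 4 (inp_idx (xs ! n))) (?fs @ ?ws)) (apps (?fs ! inp_idx (xs ! n)) ?ws)"
    using wf Ic Lc Rc Tc by (intro dispatch_ctx) auto
  have fb: "?fs ! inp_idx (xs ! n) = BH M (xs ! n) j" by (cases "xs ! n") auto
  obtain m where m: "steps m (apps (BH M (xs ! n) j) ?ws)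
             (apps (MV (nstates M) mu a' s') [?I, enc_str 2 (bin n'), L, R, T])" "m \<le> 15 + 15 * (length (bin n) + 1)"
    using BH_step[OF wf dl nn Ic Lc Rc Tc] by blast
  show ?thesis using steps_trans[OF steps_trans[OF steps_trans[OF s1 s2] s3] m(1)[folded fb]] m(2) mr(2)
    by (intro exI[of _ "6 + mr + 4 + m"]) simp
qed

lemma subst_apps: "subst (apps t ws) k v = apps (subst t k v) (map (\<lambda>w. subst w k v) ws)"
  by (induction ws arbitrary: t) auto

lemma msubst_apps: "msubst (apps t ws) vs = apps (msubst t vs) (map (\<lambda>w. msubst w vs) ws)"
  by (induction vs arbitrary: t ws) (auto simp: subst_apps comp_def)

lemma MAIN_step:
  assumes wf: "wf_tm M" and sQ: "s < nstates M"
    and c: "\<forall>v\<in>set [I, N, L, A, R, T]. closed_at 0 v \<and> is_val v"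
  shows "steps (7 + nstates M) (apps (MAIN M) [I, N, L, A, R, enc_char (nstates M) s, T])
     (apps (HH M s) [I, N, L, A, R, T])"
proof -
  let ?Q = "nstates M"
  let ?Hs = "map (HH M) [0..<?Q]"
  let ?vs = "[I, N, L, A, R, enc_char ?Q s, T]"
  have vc: "\<forall>v\<in>set ?vs. closed_at 0 v \<and> is_val v" using c sQ by (auto simp: closed_enc_char)
  have s1: "steps 7 (apps (MAIN M) ?vs) (msubst (apps (apps (Var 1) ?Hs) [Var 6, Var 5, Var 4, Var 3, Var 2, Var 0]) ?vs)"
    unfolding MAIN_def using vc by (intro lams_apps) auto
  have hs: "map (\<lambda>w. msubst w ?vs) ?Hs = ?Hs"
    using wf by (auto simp del: msubst.simps intro!: msubst_closed)
  have e: "msubst (apps (apps (Var 1) ?Hs) [Var 6, Var 5, Var 4, Var 3, Var 2, Var 0]) ?vs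
      = apps (apps (enc_char ?Q s) ?Hs) [I, N, L, A, R, T]"
    unfolding msubst_apps hs using vc by (simp add: msubst_Var del: msubst.simps)
  have s2: "steps ?Q (apps (enc_char ?Q s) (?Hs @ [I, N, L, A, R, T])) (apps (?Hs ! s) [I, N, L, A, R, T])"
    using wf c sQ by (intro dispatch_ctx) auto
  show ?thesis using steps_trans[OF s1[unfolded e] s2[unfolded apps_append]] sQ by simp
qed

lemma bin_len_pow: "n > 0 \<Longrightarrow> 2 ^ (length (bin n) - 1) \<le> n"
proof (induction n rule: less_induct)
  case (less n)
  show ?case
  proof (cases "n div 2 = 0")
    case True then show ?thesis using less by (simp add: bin_pos)
  next
    case False
    then have "2 ^ (length (bin (n div 2)) - 1) \<le> n div 2" using less by simp
    moreover have "length (bin (n div 2)) > 0" using False by (simp add: bin_pos)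
    ultimately have h: "2 ^ (length (bin (n div 2)) - 1) \<le> n div 2" "length (bin (n div 2)) > 0" by auto
    have "(2::nat) ^ length (bin (n div 2)) = 2 * 2 ^ (length (bin (n div 2)) - 1)"
      using h(2) by (cases "length (bin (n div 2))") auto
    also have "\<dots> \<le> 2 * (n div 2)" using h(1) by simp
    also have "\<dots> \<le> n" by simp
    finally show ?thesis using less.prems by (simp add: bin_pos)
  qed
qed

lemma bin_len_log: assumes nl: "n < l" shows "real (length (bin n)) \<le> 1 + log 2 (real l)"
proof (cases "n = 0")
  case True
  then show ?thesis
    using nl by simp
next
  case False
  have "2 ^ (length (bin n) - 1) \<le> l" using bin_len_pow[of n] False nl by simp
  then have "real (length (bin n) - 1) \<le> log 2 (real l)" using le_log2_of_power by blast
  then show ?thesis by linarith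
qed




lemma enc_config_eq: "enc_config M (i, n, wl, a, wr, s) = Lam (apps (Var 0) [enc_str 4 (map inp_idx i), enc_str 2 (bin n),
   enc_str 3 (map work_idx (rev wl)), enc_char 3 (work_idx a), enc_str 3 (map work_idx wr), enc_char (nstates M) s])"
  by (simp add: enc_config_def)

lemma mono_helper: "(0::real) \<le> x \<Longrightarrow> 1 \<le> a \<Longrightarrow> 1 \<le> b \<Longrightarrow> x \<le> x * a * b"
proof -
  assume h: "(0::real) \<le> x" "1 \<le> a" "1 \<le> b"
  have "1 \<le> a * b" using mult_mono[of 1 a 1 b] h by simp
  then have "x * 1 \<le> x * (a * b)" using h(1) by (rule mult_left_mono)
  then show ?thesis by (simp add: mult.assoc)
qed

lemma lin_helper:
  fixes m1 m2 L P l Z q W x :: real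
  assumes "m1 \<le> 40 + 15 * (L + 1) + P" "m2 \<le> 14" "P \<le> 40 * l + 30 * Z" "q \<le> W"
    "1 \<le> Z" "x \<le> Z" "l \<le> Z" "L \<le> 2 * x"
  shows "12 + q + m1 + m2 \<le> W + 200 * Z"
  using assms by (smt (verit))

theorem mainTheorem8:
  assumes "wf_tm M" and "input_bounded M"
  shows "\<exists>trans (c::nat). closed trans \<and> det_term trans \<and>
    (\<forall>k C. det_term k \<and> is_val k \<and> is_config M C \<and> fst (snd C) < length (fst C) \<longrightarrow>
      (is_final M C \<longrightarrow>
         (\<exists>m. (det_step ^^ m) (App (App trans k) (enc_config M C)) (App k (enc_config M C)) \<and>
              real m \<le> real c * real (length (fst C)) * log 2 (real (length (fst C))))) \<and>
      (\<forall>D. tm_step M C D \<longrightarrow>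
         (\<exists>m. (det_step ^^ m) (App (App trans k) (enc_config M C)) (App (App trans k) (enc_config M D)) \<and>
              real m \<le> real c * real (length (fst C)) * log 2 (real (length (fst C))))))"
proof -
  note wf = assms(1)
  let ?tr = "App (TB M) (TB M)"
  let ?Q = "nstates M"
  let ?c = "?Q + 200"
  have trc: "closed ?tr" "det_term ?tr" using wf by (auto simp: closed_def)
  have key: "det_term k \<and> is_val k \<and> is_config M C \<and> fst (snd C) < length (fst C) \<longrightarrow>
      (is_final M C \<longrightarrow>
         (\<exists>m. (det_step ^^ m) (App (App ?tr k) (enc_config M C)) (App k (enc_config M C)) \<and>
              real m \<le> real ?c * real (length (fst C)) * log 2 (real (length (fst C))))) \<and>
      (\<forall>D. tm_step M C D \<longrightarrow>
         (\<exists>m. (det_step ^^ m) (App (App ?tr k) (enc_config M C)) (App (App ?tr k) (enc_config M D)) \<and>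
              real m \<le> real ?c * real (length (fst C)) * log 2 (real (length (fst C)))))" for k C
  proof (intro impI)
    assume H: "det_term k \<and> is_val k \<and> is_config M C \<and> fst (snd C) < length (fst C)"
    obtain i n wl a wr s where C: "C = (i, n, wl, a, wr, s)" by (cases C) auto
    from H C obtain s0 where i: "i = IL # s0 @ [IR]" and sQ: "s < ?Q" and nl: "n < length i" and kv: "is_val k"
      by (auto simp: is_config_def)
    define l where "l = length i"
    have l2: "2 \<le> l" using i by (simp add: l_def)
    have lg: "1 \<le> log 2 (real l)" using l2 by simp
    have lpos: "1 \<le> real l" using l2 by simp
    let ?I = "enc_str 4 (map inp_idx i)"
    let ?N = "enc_str 2 (bin n)"
    let ?L = "enc_str 3 (map work_idx (rev wl))"
    let ?A = "enc_char 3 (work_idx a)"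
    let ?R = "enc_str 3 (map work_idx wr)"
    let ?S = "enc_char ?Q s"
    let ?T = "TB M"
    have encC: "enc_config M C = Lam (apps (Var 0) [?I, ?N, ?L, ?A, ?R, ?S])"
      by (simp add: C enc_config_eq)
    have vals: "\<forall>v\<in>set [?I, ?N, ?L, ?A, ?R, ?T]. closed_at 0 v \<and> is_val v"
      using wf by (auto simp: closed_enc_str closed_enc_char)
    have P0: "steps 3 (App (App ?tr k) (enc_config M C)) (App (apps (enc_config M C) [MAIN M, ?T]) k)"
      by (rule run_steps) (simp add: encC kv sQ wf TB_def)
    have P1: "steps 1 (apps (enc_config M C) [MAIN M, ?T]) (apps (MAIN M) [?I, ?N, ?L, ?A, ?R, ?S, ?T])"
      by (rule run_steps) (simp add: encC sQ wf)
    have P2: "steps (7 + ?Q) (apps (MAIN M) [?I, ?N, ?L, ?A, ?R, ?S, ?T]) (apps (HH M s) [?I, ?N, ?L, ?A, ?R, ?T])"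
      by (rule MAIN_step[OF wf sQ vals])
    have Pre: "steps (3 + (1 + (7 + ?Q))) (App (App ?tr k) (enc_config M C)) (App (apps (HH M s) [?I, ?N, ?L, ?A, ?R, ?T]) k)"
      using steps_trans[OF P0 steps_app1[OF steps_trans[OF P1 P2] kv]] .
    show "(is_final M C \<longrightarrow>
         (\<exists>m. (det_step ^^ m) (App (App ?tr k) (enc_config M C)) (App k (enc_config M C)) \<and>
              real m \<le> real ?c * real (length (fst C)) * log 2 (real (length (fst C))))) \<and>
      (\<forall>D. tm_step M C D \<longrightarrow>
         (\<exists>m. (det_step ^^ m) (App (App ?tr k) (enc_config M C)) (App (App ?tr k) (enc_config M D)) \<and>
              real m \<le> real ?c * real (length (fst C)) * log 2 (real (length (fst C)))))"
    proof (intro conjI impI allI)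
      assume fin: "is_final M C"
      then have hh: "HH M s = HF M s" using C by (auto simp: is_final_def HH_def)
      have F1: "steps 6 (apps (HF M s) [?I, ?N, ?L, ?A, ?R, ?T]) (Lam (App (Var 0) (enc_config M C)))"
        by (rule run_steps) (simp add: encC HF_def sQ wf)
      have F2: "steps 1 (App (Lam (App (Var 0) (enc_config M C))) k) (App k (enc_config M C))"
        by (rule run_steps) (simp add: encC sQ kv)
      have "steps (3 + (1 + (7 + ?Q)) + 6 + 1) (App (App ?tr k) (enc_config M C)) (App k (enc_config M C))"
        using steps_trans[OF steps_trans[OF Pre[unfolded hh] steps_app1[OF F1 kv]] F2] .
      moreover have "real (3 + (1 + (7 + ?Q)) + 6 + 1) \<le> real ?c * real (length (fst C)) * log 2 (real (length (fst C)))"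
      proof -
        have "real (3 + (1 + (7 + ?Q)) + 6 + 1) \<le> real ?c" by simp
        also have "\<dots> \<le> real ?c * real l * log 2 (real l)" by (rule mono_helper) (use lpos lg in auto)
        finally show ?thesis by (simp add: C l_def)
      qed
      ultimately show "\<exists>m. steps m (App (App ?tr k) (enc_config M C)) (App k (enc_config M C)) \<and>
              real m \<le> real ?c * real (length (fst C)) * log 2 (real (length (fst C)))" by blast
    next
      fix D assume st: "tm_step M C D"
      then obtain d a' mu s' n' wl' a'' wr' where dl: "delta M (i ! n) a s = Some (d, a', mu, s')"
        and nn: "int n' = int n + d" and mw: "move_work mu wl a' wr = (wl', a'', wr')"
        and D: "D = (i, n', wl', a'', wr', s')"
        using C by (auto simp: tm_step_def)
      have w: "s' < ?Q" "s \<noteq> s_T M" "s \<noteq> s_F M" using wf_delta[OF wf dl] by auto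
      then have hh: "HH M s = HN M s" by (simp add: HH_def)
      have Lc: "closed_at 0 ?L" "is_val ?L" and Rc: "closed_at 0 ?R" "is_val ?R" and Tc: "closed_at 0 ?T" "is_val ?T"
        using vals by auto
      obtain m1 where m1: "steps m1 (apps (HN M s) [?I, ?N, ?L, ?A, ?R, ?T])
             (apps (MV ?Q mu a' s') [?I, enc_str 2 (bin n'), ?L, ?R, ?T])"
          "m1 \<le> 40 + 15 * (length (bin n) + 1) + (n + 1) * (40 + 15 * length (bin n))"
        using HN_step[OF wf nl dl nn Lc Rc Tc] by blast
      have Ic: "closed_at 0 ?I" "is_val ?I" by (auto simp: closed_enc_str)
      have N'c: "closed_at 0 (enc_str 2 (bin n'))" "is_val (enc_str 2 (bin n'))" by (auto simp: closed_enc_str)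
      let ?encD = "Lam (apps (Var 0) [?I, enc_str 2 (bin n'), enc_str 3 (map work_idx (rev wl')),
         enc_char 3 (work_idx a''), enc_str 3 (map work_idx wr'), enc_char ?Q s'])"
      obtain m2 where m2: "steps m2 (apps (MV ?Q mu a' s') [?I, enc_str 2 (bin n'), ?L, ?R, ?T])
          (Lam (apps ?T [?T, Var 0, ?encD]))" "m2 \<le> 14"
        using MV_move[OF w(1) Ic N'c Tc mw] by blast
      have encD: "enc_config M D = ?encD" by (simp add: D enc_config_eq)
      have S3: "steps 1 (App (Lam (apps ?T [?T, Var 0, ?encD])) k) (App (App ?tr k) (enc_config M D))"
        by (rule run_steps) (simp add: encD w(1) kv wf)
      have "steps (3 + (1 + (7 + ?Q)) + (m1 + m2) + 1) (App (App ?tr k) (enc_config M C)) (App (App ?tr k) (enc_config M D))"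
        using steps_trans[OF steps_trans[OF Pre[unfolded hh] steps_app1[OF steps_trans[OF m1(1) m2(1)] kv]] S3] .
      moreover have "real (3 + (1 + (7 + ?Q)) + (m1 + m2) + 1) \<le> real ?c * real (length (fst C)) * log 2 (real (length (fst C)))"
      proof -
        define x where "x = log 2 (real l)"
        define L where "L = real (length (bin n))"
        have x1: "1 \<le> x" using lg by (simp add: x_def)
        have Lx: "L \<le> 2 * x" using bin_len_log[OF nl] x1 by (simp add: L_def x_def l_def)
        have L0: "0 \<le> L" by (simp add: L_def)
        have n1: "real n + 1 \<le> real l" using nl by (simp add: l_def)
        have m1r: "real m1 \<le> 40 + 15 * (L + 1) + (real n + 1) * (40 + 15 * L)"
          using m1(2) unfolding L_def by (metis (mono_tags, lifting) of_nat_1 of_nat_add of_nat_le_iff of_nat_mult of_nat_numeral)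
        have f5: "(real n + 1) * (40 + 15 * L) \<le> real l * (40 + 30 * x)"
          by (rule mult_mono) (use n1 Lx L0 in auto)
        have f1: "real ?Q \<le> real ?Q * (real l * x)" using mono_helper[of "real ?Q" "real l" x] lpos x1 by (simp add: mult.assoc)
        have f2: "1 \<le> real l * x" using mult_mono[of 1 "real l" 1 x] lpos x1 by simp
        have f3: "x \<le> real l * x" using mult_right_mono[of 1 "real l" x] lpos x1 by simp
        have f4: "real l \<le> real l * x" using mult_left_mono[of 1 x "real l"] lpos x1 by simp
        have m2r: "real m2 \<le> 14" using m2(2) by simp
        have e1: "real l * (40 + 30 * x) = 40 * real l + 30 * (real l * x)" by (simp add: algebra_simps)
        have e2: "real ?c * real l * x = real ?Q * (real l * x) + 200 * (real l * x)" by (simp add: algebra_simps)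
        have "real (3 + (1 + (7 + ?Q)) + (m1 + m2) + 1) = 12 + real ?Q + real m1 + real m2" by simp
        also have "\<dots> \<le> real ?c * real l * x"
          unfolding e2 using lin_helper[OF m1r m2r f5[unfolded e1] f1 f2 f3 f4 Lx] .
        finally show ?thesis by (simp add: C l_def x_def)
      qed
      ultimately show "\<exists>m. steps m (App (App ?tr k) (enc_config M C)) (App (App ?tr k) (enc_config M D)) \<and>
              real m \<le> real ?c * real (length (fst C)) * log 2 (real (length (fst C)))" by blast
    qed
  qed
  show ?thesis
    apply (rule exI[of _ ?tr], rule exI[of _ ?c])
    using trc key by blast
qed


end
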